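(* Let $A,B\in\operatorname{Sym}(n,\mathbb{R})$ be positive semidefinite with $\operatorname{rank}A\ge2$ and $\operatorname{rank}B\ge2$, and let $D:=\{x\in\mathbb{R}^n:{}^txAx<1\}$, $E:=\{x\in\mathbb{R}^n:{}^txBx<1\}$. Suppose the boundaries of $D$ and $E$ do not intersect transversally anywhere, i.e. $Ax$ and $Bx$ are linearly dependent for every $x$ with ${}^txAx={}^txBx=1$. If $E\cap D\ne\emptyset$, then $E\subset D$ or $D\subset E$. *)

theory Defs
  imports "HOL-Analysis.Analysis"
begin

end

theory Submission
  imports Defs
begin

lemma sym_dot:
  fixes A :: "real^'n^'n"
  assumes "transpose A = A"
  shows "x \<bullet> (A *v y) = y \<bullet> (A *v x)"
proof -
  have "x \<bullet> (A *v y) = (x v* A) \<bullet> y" by (simp add: dot_lmul_matrix)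
  also have "x v* A = transpose A *v x" by (simp add: transpose_matrix_vector)
  finally show ?thesis using assms by (simp add: inner_commute)
qed

lemma quad_expand:
  fixes A :: "real^'n^'n"
  assumes "transpose A = A"
  shows "(z + t *\<^sub>R w) \<bullet> (A *v (z + t *\<^sub>R w)) =
     z \<bullet> (A *v z) + 2 * t * (w \<bullet> (A *v z)) + t^2 * (w \<bullet> (A *v w))"
proof -
  have "z \<bullet> (A *v w) = w \<bullet> (A *v z)" using sym_dot[OF assms] .
  then show ?thesis
    by (simp add: matrix_vector_right_distrib matrix_vector_mult_scaleR inner_add_left
        inner_add_right power2_eq_square algebra_simps)
qed

lemma psd_zero:
  fixes A :: "real^'n^'n"
  assumes sym: "transpose A = A" and psd: "\<forall>x. 0 \<le> x \<bullet> (A *v x)"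
    and z: "z \<bullet> (A *v z) = 0"
  shows "A *v z = 0"
proof -
  define w where "w = A *v z"
  define c where "c = w \<bullet> (A *v z)"
  define d where "d = w \<bullet> (A *v w)"
  have d0: "d \<ge> 0" using psd d_def by auto
  define t where "t = - c / (d + 1)"
  have "0 \<le> (z + t *\<^sub>R w) \<bullet> (A *v (z + t *\<^sub>R w))" using psd by blast
  also have "\<dots> = 2 * t * c + t^2 * d" using quad_expand[OF sym] z c_def d_def by simp
  finally have q0: "0 \<le> 2 * t * c + t^2 * d" .
  have dp: "d + 1 > 0" using d0 by simp
  have ts: "t * (d + 1) = - c" unfolding t_def using dp by simp
  hence ce: "c = - (t * (d + 1))" by simp
  have "2 * t * c + t^2 * d = - (t^2 * (d + 2))"
    unfolding ce by (simp add: power2_eq_square algebra_simps)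
  hence "t^2 * (d + 2) \<le> 0" using q0 by linarith
  hence "t^2 \<le> 0" using d0 by (simp add: mult_le_0_iff)
  hence "t = 0" by simp
  hence "c = 0" using ce by simp
  thus ?thesis unfolding c_def w_def by simp
qed

theorem proposition2p5:
  fixes A B :: "real^'n^'n"
  assumes symA: "transpose A = A" and symB: "transpose B = B"
    and psdA: "\<forall>x. 0 \<le> x \<bullet> (A *v x)" and psdB: "\<forall>x. 0 \<le> x \<bullet> (B *v x)"
    and rankA: "rank A \<ge> 2" and rankB: "rank B \<ge> 2"
    and notrans: "\<forall>x. x \<bullet> (A *v x) = 1 \<and> x \<bullet> (B *v x) = 1 \<longrightarrow>
        (\<exists>a b :: real. (a \<noteq> 0 \<or> b \<noteq> 0) \<and> a *\<^sub>R (A *v x) + b *\<^sub>R (B *v x) = 0)"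
    and meet: "{x. x \<bullet> (B *v x) < 1} \<inter> {x. x \<bullet> (A *v x) < 1} \<noteq> {}"
  shows "{x. x \<bullet> (B *v x) < 1} \<subseteq> {x. x \<bullet> (A *v x) < 1} \<or>
         {x. x \<bullet> (A *v x) < 1} \<subseteq> {x. x \<bullet> (B *v x) < 1}"
proof -
  have key: "A *v z = B *v z" if eq: "z \<bullet> (A *v z) = z \<bullet> (B *v z)" for z
  proof (cases "z \<bullet> (A *v z) = 0")
    case True
    then show ?thesis using psd_zero[OF symA psdA] psd_zero[OF symB psdB] eq by metis
  next
    case False
    define s where "s = z \<bullet> (A *v z)"
    have s0: "s > 0" using False psdA s_def by (metis order_less_le)
    define u where "u = (1 / sqrt s) *\<^sub>R z"
    have qa: "u \<bullet> (A *v u) = 1" unfolding u_def using s0 s_def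
      by (simp add: matrix_vector_mult_scaleR)
    have qb: "u \<bullet> (B *v u) = 1" unfolding u_def using s0 s_def eq
      by (simp add: matrix_vector_mult_scaleR)
    obtain a b :: real where ab: "a \<noteq> 0 \<or> b \<noteq> 0"
      and lin: "a *\<^sub>R (A *v u) + b *\<^sub>R (B *v u) = 0"
      using notrans qa qb by blast
    have "u \<bullet> (a *\<^sub>R (A *v u) + b *\<^sub>R (B *v u)) = a + b"
      using qa qb by (simp add: inner_add_right)
    hence "a + b = 0" using lin by simp
    hence "b = - a" "a \<noteq> 0" using ab by auto
    hence "A *v u = B *v u" using lin by (simp add: algebra_simps)
    hence "sqrt s *\<^sub>R (A *v u) = sqrt s *\<^sub>R (B *v u)" by simp
    moreover have "z = sqrt s *\<^sub>R u" unfolding u_def using s0 by simp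
    ultimately show ?thesis by (simp add: matrix_vector_mult_scaleR)
  qed
  show ?thesis
  proof (rule ccontr)
    assume "\<not> ?thesis"
    then obtain y x where y: "y \<bullet> (B *v y) < 1" "\<not> y \<bullet> (A *v y) < 1"
      and x: "x \<bullet> (A *v x) < 1" "\<not> x \<bullet> (B *v x) < 1" by blast
    define q where "q v = v \<bullet> (A *v v) - v \<bullet> (B *v v)" for v
    define P where "P = q y"
    define N where "N = q x"
    have P0: "P > 0" using y unfolding P_def q_def by simp
    have N0: "N < 0" using x unfolding N_def q_def by simp
    define c where "c = x \<bullet> (A *v y) - x \<bullet> (B *v y)"
    have qexp: "q (y + t *\<^sub>R x) = P + 2 * t * c + t^2 * N" for t
      unfolding q_def P_def N_def c_def quad_expand[OF symA] quad_expand[OF symB]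
      using sym_dot[OF symA, of x y] sym_dot[OF symB, of x y]
      by (simp add: algebra_simps)
    define r where "r = sqrt (c^2 - P * N)"
    have disc: "c^2 - P * N > 0" using P0 N0
      by (smt (verit) mult_pos_neg zero_le_power2)
    have r0: "r > 0" using disc r_def by simp
    have r2: "r^2 = c^2 - P * N" using disc r_def by simp
    have root: "q (y + t *\<^sub>R x) = 0" if t: "t = (- c + e * r) / N" and e: "e = 1 \<or> e = -1" for t e
    proof -
      have tN: "t * N = - c + e * r" using t N0 by simp
      have "P + 2 * t * c + t^2 * N = (N * P + 2 * (t * N) * c + (t * N)^2) / N"
        using N0 by (simp add: field_simps power2_eq_square)
      also have "\<dots> = (N * P + 2 * (- c + e * r) * c + (- c + e * r)^2) / N" using tN by simp
      also have "N * P + 2 * (- c + e * r) * c + (- c + e * r)^2 = 0"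
        using e r2 by (auto simp: power2_eq_square algebra_simps)
      finally show ?thesis using qexp by simp
    qed
    define t0 where "t0 = (- c + r) / N"
    define t1 where "t1 = (- c - r) / N"
    have "q (y + t0 *\<^sub>R x) = 0" using root[of t0 1] t0_def by simp
    hence k0: "A *v (y + t0 *\<^sub>R x) = B *v (y + t0 *\<^sub>R x)" using key unfolding q_def by simp
    have "q (y + t1 *\<^sub>R x) = 0" using root[of t1 "-1"] t1_def by simp
    hence k1: "A *v (y + t1 *\<^sub>R x) = B *v (y + t1 *\<^sub>R x)" using key unfolding q_def by simp
    have tne: "t0 \<noteq> t1" using r0 N0 unfolding t0_def t1_def by (simp add: field_simps)
    have "A *v (y + t0 *\<^sub>R x) - A *v (y + t1 *\<^sub>R x) = B *v (y + t0 *\<^sub>R x) - B *v (y + t1 *\<^sub>R x)"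
      using k0 k1 by simp
    hence "(t0 - t1) *\<^sub>R (A *v x) = (t0 - t1) *\<^sub>R (B *v x)"
      by (simp add: matrix_vector_right_distrib matrix_vector_mult_scaleR scaleR_diff_left)
    hence "A *v x = B *v x" using tne by simp
    hence "N = 0" unfolding N_def q_def by simp
    thus False using N0 by simp
  qed
qed

end
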